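(* Let $m\geq 2$ be an integer and let $\delta$ be a real number with $0\leq\delta<\frac{1}{2m}\left(\frac12-\frac{1}{2^m-1}\right)$. Then there exists a sequence of binary $[[N_i,k_i,d_i]]$ stabilizer codes with $N_i\to\infty$, $$\liminf_{i\to\infty}\frac{k_i}{N_i}\geq R_m^{(\mathrm{ALT})}(\delta):=1-\frac{10}{3}m\delta-\frac{2}{2^m-1},\qquad \liminf_{i\to\infty}\frac{d_i}{N_i}\geq\delta.$$
   Context: A binary $[[n,k,d]]$ stabilizer code is given by an $(n+k)$-dimensional subspace $C\subseteq\mathbf{F}_2^{2n}$ with $C^{\perp\mathrm s}\subseteq C$, where $\langle\vec x,\vec y\rangle_{\mathrm s}=\sum_{i=1}^n x_iy_{n+i}-\sum_{i=1}^n x_{n+i}y_i$ and $C^{\perp\mathrm s}$ is the orthogonal complement of $C$ with respect to this form; its minimum distance $d$ is $\min\{w(\vec x)\mid \vec x\in C\setminus C^{\perp\mathrm s}\}$ with $w(\vec x)=\#\{1\le i\le n\mid (x_i,x_{n+i})\neq(0,0)\}$. *)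

theory Defs
  imports Complex_Main "HOL-Library.Liminf_Limsup" "HOL-Library.Extended_Real"
begin

text \<open>Vectors of F_2^{2n} are modelled as functions nat => bool (True = 1)
  vanishing outside {0..<2n}; coordinates 0..n-1 are x_1..x_n and
  n..2n-1 are x_{n+1}..x_{2n}.\<close>

definition vecs :: "nat \<Rightarrow> (nat \<Rightarrow> bool) set" where
  "vecs n = {x. \<forall>i. 2 * n \<le> i \<longrightarrow> \<not> x i}"

definition vzero :: "nat \<Rightarrow> bool" where
  "vzero = (\<lambda>_. False)"

definition vadd :: "(nat \<Rightarrow> bool) \<Rightarrow> (nat \<Rightarrow> bool) \<Rightarrow> nat \<Rightarrow> bool" where
  "vadd x y = (\<lambda>i. x i \<noteq> y i)"

definition vsum :: "(nat \<Rightarrow> bool) set \<Rightarrow> nat \<Rightarrow> bool" where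
  "vsum S = (\<lambda>i. odd (card {x \<in> S. x i}))"

definition is_subspace :: "nat \<Rightarrow> (nat \<Rightarrow> bool) set \<Rightarrow> bool" where
  "is_subspace n C \<longleftrightarrow> C \<subseteq> vecs n \<and> vzero \<in> C \<and> (\<forall>x\<in>C. \<forall>y\<in>C. vadd x y \<in> C)"

definition has_dim :: "(nat \<Rightarrow> bool) set \<Rightarrow> nat \<Rightarrow> bool" where
  "has_dim C d \<longleftrightarrow> (\<exists>B. finite B \<and> B \<subseteq> C \<and> card B = d
      \<and> (\<forall>S\<subseteq>B. S \<noteq> {} \<longrightarrow> vsum S \<noteq> vzero)
      \<and> (\<forall>x\<in>C. \<exists>S\<subseteq>B. x = vsum S))"

text \<open>Symplectic form over F_2 (the minus sign is irrelevant in characteristic 2):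
  it is 0 iff the number of i<n with x_i y_{n+i} = 1, plus the number with
  x_{n+i} y_i = 1, is even.\<close>
definition symp_orth :: "nat \<Rightarrow> (nat \<Rightarrow> bool) \<Rightarrow> (nat \<Rightarrow> bool) \<Rightarrow> bool" where
  "symp_orth n x y \<longleftrightarrow>
     even (card {i. i < n \<and> x i \<and> y (n + i)} + card {i. i < n \<and> x (n + i) \<and> y i})"

definition symp_perp :: "nat \<Rightarrow> (nat \<Rightarrow> bool) set \<Rightarrow> (nat \<Rightarrow> bool) set" where
  "symp_perp n C = {y \<in> vecs n. \<forall>x\<in>C. symp_orth n x y}"

definition stabilizer_code :: "nat \<Rightarrow> nat \<Rightarrow> (nat \<Rightarrow> bool) set \<Rightarrow> bool" where
  "stabilizer_code n k C \<longleftrightarrow> is_subspace n C \<and> has_dim C (n + k) \<and> symp_perp n C \<subseteq> C"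

definition sweight :: "nat \<Rightarrow> (nat \<Rightarrow> bool) \<Rightarrow> nat" where
  "sweight n x = card {i. i < n \<and> (x i \<or> x (n + i))}"

text \<open>Minimum distance (Inf of the empty set of naturals is 0, only relevant when k = 0).\<close>
definition min_dist :: "nat \<Rightarrow> (nat \<Rightarrow> bool) set \<Rightarrow> nat" where
  "min_dist n C = Inf (sweight n ` (C - symp_perp n C))"

end

theory Submission
  imports Defs "HOL-Library.Z2" "HOL-Library.FuncSet"
begin

declare add_bit_eq_xor[simp del] mult_bit_eq_and[simp del]

lemma bit_add_self[simp]: "(x::bit) + x = 0"
  by (cases x) simp_all

lemma bit_mult_eq_one: "((x::bit) * y = 1) \<longleftrightarrow> x = 1 \<and> y = 1"
  by (cases x; cases y) simp_all

lemma of_nat_bit: "(of_nat k :: bit) = of_bool (odd k)"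
  by (induction k) auto

lemma sum_bit: "finite J \<Longrightarrow> (\<Sum>k\<in>J. (b k :: bit)) = of_bool (odd (card {k\<in>J. b k = 1}))"
proof (induction J rule: finite_induct)
  case empty
  then show ?case by simp
next
  case (insert x F)
  have fin: "finite {k \<in> F. b k = 1}" using insert by auto
  show ?case
  proof (cases "b x = 1")
    case True
    then have "{k \<in> insert x F. b k = 1} = insert x {k \<in> F. b k = 1}" by auto
    then show ?thesis using insert True fin by (simp add: card_insert_if)
  next
    case False
    then have "b x = 0" by simp
    moreover have "{k \<in> insert x F. b k = 1} = {k \<in> F. b k = 1}" using False by auto
    ultimately show ?thesis using insert by simp
  qed
qed

definition tb :: "(nat \<Rightarrow> bit) \<Rightarrow> nat \<Rightarrow> bool" where
  "tb X = (\<lambda>i. X i = 1)"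

definition fb :: "(nat \<Rightarrow> bool) \<Rightarrow> nat \<Rightarrow> bit" where
  "fb x = (\<lambda>i. of_bool (x i))"

lemma fb_tb[simp]: "fb (tb X) = X"
proof
  fix i show "fb (tb X) i = X i" unfolding fb_def tb_def by (cases "X i") simp_all
qed

lemma tb_fb[simp]: "tb (fb x) = x"
  unfolding fb_def tb_def by auto

lemma tb_inj: "tb X = tb Y \<Longrightarrow> X = Y"
  by (metis fb_tb)

lemma sum_bit_card: "(\<Sum>i<(n::nat). fb x (f i) * fb y (g i)) = of_bool (odd (card {i. i < n \<and> x (f i) \<and> y (g i)}))"
proof -
  have "(\<Sum>i<n. fb x (f i) * fb y (g i)) = of_bool (odd (card {i\<in>{..<n}. fb x (f i) * fb y (g i) = 1}))"
    by (rule sum_bit[OF finite_lessThan])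
  also have "{i\<in>{..<n}. fb x (f i) * fb y (g i) = 1} = {i. i < n \<and> x (f i) \<and> y (g i)}"
    by (auto simp: fb_def bit_mult_eq_one)
  finally show ?thesis .
qed

lemma symp_orth_bit:
  "symp_orth n x y \<longleftrightarrow> (\<Sum>i<n. fb x i * fb y (n+i) + fb x (n+i) * fb y i) = 0"
  unfolding symp_orth_def sum.distrib
  using sum_bit_card[where n=n and x=x and f="\<lambda>i. i" and y=y and g="\<lambda>i. n+i"]
        sum_bit_card[where n=n and x=x and f="\<lambda>i. n+i" and y=y and g="\<lambda>i. i"]
  by (auto simp: of_bool_def)


definition Vn :: "nat \<Rightarrow> (nat \<Rightarrow> bit) set" where
  "Vn n = {x. \<forall>i. n \<le> i \<longrightarrow> x i = 0}"

definition unit :: "nat \<Rightarrow> nat \<Rightarrow> bit" where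
  "unit k = (\<lambda>i. if i = k then 1 else 0)"

lemma sum_unit_right: "finite S \<Longrightarrow> (\<Sum>i\<in>S. f i * unit k i) = (if k \<in> S then f k else 0)"
proof -
  assume "finite S"
  have "(\<Sum>i\<in>S. f i * unit k i) = (\<Sum>i\<in>S. if k = i then f k else 0)"
    by (rule sum.cong) (auto simp: unit_def)
  then show ?thesis using \<open>finite S\<close> by simp
qed

lemma sum_unit_left: "finite S \<Longrightarrow> (\<Sum>i\<in>S. unit k i * f i) = (if k \<in> S then f k else 0)"
  using sum_unit_right[of S f k] by (simp add: mult.commute)

lemma sum_split_add: "(\<Sum>i<a+(r::nat). f i) = (\<Sum>i<a. f i) + (\<Sum>j<r. f (a+j))"
  by (induction r) (simp_all add: add.assoc)

lemma card_UNIV_bit: "card (UNIV :: bit set) = 2"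
proof -
  have "(UNIV :: bit set) = {0, 1}" using bit_not_zero_iff by auto
  moreover have "card {0::bit, 1} = 2" by simp
  ultimately show ?thesis by metis
qed

lemma finite_UNIV_bit: "finite (UNIV :: bit set)"
  using card_UNIV_bit card.infinite by fastforce

lemma Vn_bij: "bij_betw (\<lambda>x. restrict x {..<n}) (Vn n) (PiE {..<n} (\<lambda>_. UNIV))"
proof (rule bij_betw_imageI)
  show "inj_on (\<lambda>x. restrict x {..<n}) (Vn n)"
  proof (rule inj_onI)
    fix x y assume x: "x \<in> Vn n" and y: "y \<in> Vn n" and e: "restrict x {..<n} = restrict y {..<n}"
    show "x = y"
    proof
      fix i show "x i = y i"
      proof (cases "i < n")
        case True then show ?thesis using fun_cong[OF e, of i] by simp
      next
        case False then show ?thesis using x y by (simp add: Vn_def)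
      qed
    qed
  qed
  show "(\<lambda>x. restrict x {..<n}) ` Vn n = PiE {..<n} (\<lambda>_. UNIV)"
  proof
    show "(\<lambda>x. restrict x {..<n}) ` Vn n \<subseteq> PiE {..<n} (\<lambda>_. UNIV)" by (simp add: image_subset_iff)
    show "PiE {..<n} (\<lambda>_. UNIV) \<subseteq> (\<lambda>x. restrict x {..<n}) ` Vn n"
    proof
      fix f assume f: "f \<in> PiE {..<n} (\<lambda>_. (UNIV::bit set))"
      let ?x = "\<lambda>i. if i < n then f i else 0"
      have h1: "?x \<in> Vn n" by (simp add: Vn_def)
      have h2: "f = restrict ?x {..<n}"
        using f by (auto simp: PiE_def extensional_def)
      show "f \<in> (\<lambda>x. restrict x {..<n}) ` Vn n" by (rule image_eqI[where f="\<lambda>x. restrict x {..<n}", OF h2 h1])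
    qed
  qed
qed

lemma card_Vn: "card (Vn n) = 2 ^ n"
  using bij_betw_same_card[OF Vn_bij[of n]]
  by (simp add: card_PiE card_UNIV_bit)

lemma finite_Vn: "finite (Vn n)"
proof -
  have "finite (PiE {..<n} (\<lambda>_. (UNIV::bit set)))"
    by (rule finite_PiE) (auto simp: finite_UNIV_bit)
  then show ?thesis using bij_betw_finite[OF Vn_bij[of n]] by simp
qed

lemma row_count:
  assumes "i0 < T" "u i0 = 1"
  shows "card {\<alpha>\<in>Vn T. (\<Sum>i<T. \<alpha> i * u i) = c} = 2 ^ (T - 1)"
proof -
  define S where "S c = {\<alpha>\<in>Vn T. (\<Sum>i<T. \<alpha> i * u i) = c}" for c
  define \<phi> where "\<phi> \<alpha> = (\<lambda>i. \<alpha> i + unit i0 i)" for \<alpha> :: "nat \<Rightarrow> bit"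
  have phiphi: "\<phi> (\<phi> \<alpha>) = \<alpha>" for \<alpha>
    unfolding \<phi>_def by (simp add: add.assoc)
  have inj: "inj_on \<phi> A" for A
    by (metis inj_onI phiphi)
  have phisum: "(\<Sum>i<T. \<phi> \<alpha> i * u i) = (\<Sum>i<T. \<alpha> i * u i) + 1" for \<alpha>
  proof -
    have "(\<Sum>i<T. \<phi> \<alpha> i * u i) = (\<Sum>i<T. \<alpha> i * u i) + (\<Sum>i<T. unit i0 i * u i)"
      unfolding \<phi>_def by (simp add: distrib_right sum.distrib)
    also have "(\<Sum>i<T. unit i0 i * u i) = 1" using assms by (simp add: sum_unit_left)
    finally show ?thesis .
  qed
  have phiVn: "\<alpha> \<in> Vn T \<Longrightarrow> \<phi> \<alpha> \<in> Vn T" for \<alpha>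
    using assms(1) unfolding Vn_def \<phi>_def unit_def by auto
  have maps: "\<phi> ` S c \<subseteq> S (c + 1)" for c
    unfolding S_def using phiVn phisum by auto
  have finS: "finite (S c)" for c unfolding S_def using finite_Vn by simp
  have le: "card (S c) \<le> card (S (c + 1))" for c
    by (rule card_inj_on_le[OF inj maps finS])
  have eq: "card (S c) = card (S (c + 1))" for c
    using le[of c] le[of "c + 1"] by (simp add: add.assoc)
  have un: "S 0 \<union> S 1 = Vn T" unfolding S_def using bit_not_zero_iff by auto
  have dis: "S 0 \<inter> S 1 = {}" unfolding S_def by auto
  have "card (S 0) + card (S 1) = 2 ^ T"
    using card_Un_disjoint[OF finS finS dis] un card_Vn by simp
  then have "2 * card (S 0) = 2 ^ T" using eq[of 0] by simp
  moreover have "(2::nat) ^ T = 2 * 2 ^ (T - 1)" using assms(1)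
    by (metis Suc_diff_1 gr_implies_not_zero not_gr_zero power_Suc)
  ultimately have c0: "card (S 0) = 2 ^ (T - 1)" by simp
  have "card (S c) = 2 ^ (T - 1)"
  proof (cases "c = 0")
    case True then show ?thesis using c0 by simp
  next
    case False then have "c = 1" by simp
    then show ?thesis using c0 eq[of 0] by simp
  qed
  then show ?thesis unfolding S_def .
qed

definition Mats :: "nat \<Rightarrow> nat \<Rightarrow> (nat \<Rightarrow> nat \<Rightarrow> bit) set" where
  "Mats R T = PiE {..<R} (\<lambda>_. Vn T)"

lemma card_Mats: "card (Mats R T) = (2 ^ T) ^ R"
  unfolding Mats_def by (simp add: card_PiE card_Vn)

lemma finite_Mats: "finite (Mats R T)"
  unfolding Mats_def by (rule finite_PiE) (auto simp: finite_Vn)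

lemma event_count:
  assumes "i0 < T" "u i0 = 1"
  shows "card {M\<in>Mats R T. \<forall>j<R. (\<Sum>i<T. M j i * u i) = c j} = (2 ^ (T - 1)) ^ R"
proof -
  have "{M\<in>Mats R T. \<forall>j<R. (\<Sum>i<T. M j i * u i) = c j}
        = PiE {..<R} (\<lambda>j. {\<alpha>\<in>Vn T. (\<Sum>i<T. \<alpha> i * u i) = c j})"
    unfolding Mats_def by (auto simp: PiE_def Pi_def)
  then show ?thesis using row_count[where u=u and T=T, OF assms] by (simp add: card_PiE)
qed

lemma exists_avoid:
  assumes "finite I" "\<And>z. z \<in> I \<Longrightarrow> E z \<subseteq> M" "\<And>z. z \<in> I \<Longrightarrow> card (E z) \<le> K"
    "finite M" "card I * K < card M"
  shows "\<exists>A\<in>M. \<forall>z\<in>I. A \<notin> E z"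
proof (rule ccontr)
  assume "\<not> ?thesis"
  have fin: "\<And>z. z \<in> I \<Longrightarrow> finite (E z)" using assms(2,4) finite_subset by blast
  from \<open>\<not> ?thesis\<close> have "M \<subseteq> (\<Union>z\<in>I. E z)" by auto
  then have "card M \<le> card (\<Union>z\<in>I. E z)"
    by (rule card_mono[rotated]) (use assms fin in auto)
  also have "\<dots> \<le> (\<Sum>z\<in>I. card (E z))" by (rule card_UN_le[OF assms(1)])
  also have "\<dots> \<le> (\<Sum>z\<in>I. K)" by (rule sum_mono) (use assms in auto)
  also have "\<dots> = card I * K" by simp
  finally show False using assms(5) by simp
qed


definition ind :: "nat set \<Rightarrow> nat \<Rightarrow> bit" where
  "ind J = (\<lambda>i. of_bool (i \<in> J))"

lemma vzero_tb: "vzero = tb (\<lambda>_. 0)"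
  unfolding vzero_def tb_def by simp

lemma vsum_image:
  assumes "finite J" "inj_on f J" "\<And>k. f k = tb (F k)"
  shows "vsum (f ` J) = tb (\<lambda>i. \<Sum>k\<in>J. F k i)"
proof
  fix i
  have "{x \<in> f ` J. x i} = f ` {k\<in>J. f k i}" by auto
  then have "card {x \<in> f ` J. x i} = card {k\<in>J. f k i}"
    using card_image[OF inj_on_subset[OF assms(2)]] by auto
  also have "{k\<in>J. f k i} = {k\<in>J. F k i = 1}" using assms(3) by (auto simp: tb_def)
  finally have c: "card {x \<in> f ` J. x i} = card {k\<in>J. F k i = 1}" .
  show "vsum (f ` J) i = tb (\<lambda>i. \<Sum>k\<in>J. F k i) i"
    unfolding vsum_def tb_def sum_bit[OF assms(1)] c by simp
qed

lemma has_dim_image: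
  fixes E :: "(nat \<Rightarrow> bit) \<Rightarrow> nat \<Rightarrow> bit"
  assumes add: "\<And>x y. x \<in> Vn D \<Longrightarrow> y \<in> Vn D \<Longrightarrow> E (\<lambda>i. x i + y i) = (\<lambda>i. E x i + E y i)"
    and inj: "\<And>c. c \<in> Vn D \<Longrightarrow> E c = (\<lambda>_. 0) \<Longrightarrow> c = (\<lambda>_. 0)"
  shows "has_dim (tb ` E ` Vn D) D"
proof -
  have z: "(\<lambda>_. 0::bit) \<in> Vn D" by (simp add: Vn_def)
  have E0: "E (\<lambda>_. 0) = (\<lambda>_. 0)"
  proof -
    have "E (\<lambda>i. 0 + 0) = (\<lambda>i. E (\<lambda>_. 0) i + E (\<lambda>_. 0) i)" using add[OF z z] by simp
    then show ?thesis by simp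
  qed
  have unitV: "k < D \<Longrightarrow> unit k \<in> Vn D" for k by (simp add: Vn_def unit_def)
  have indV: "J \<subseteq> {..<D} \<Longrightarrow> ind J \<in> Vn D" for J by (auto simp: Vn_def ind_def)
  have Eind: "J \<subseteq> {..<D} \<Longrightarrow> E (ind J) = (\<lambda>i. \<Sum>k\<in>J. E (unit k) i)" for J
  proof -
    assume J: "J \<subseteq> {..<D}"
    then have "finite J" using finite_subset by blast
    then show ?thesis using J
    proof (induction J rule: finite_induct)
      case empty
      have "ind {} = (\<lambda>_. 0)" by (simp add: ind_def)
      then show ?case using E0 by simp
    next
      case (insert k F)
      have e: "ind (insert k F) = (\<lambda>i. unit k i + ind F i)"
        using insert(2) by (auto simp: ind_def unit_def)
      have "E (ind (insert k F)) = (\<lambda>i. E (unit k) i + E (ind F) i)"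
        unfolding e using insert by (intro add unitV indV) auto
      then show ?case using insert by simp
    qed
  qed
  define f where "f k = tb (E (unit k))" for k
  have injf: "inj_on f {..<D}"
  proof (rule inj_onI)
    fix k k' assume k: "k \<in> {..<D}" and k': "k' \<in> {..<D}" and e: "f k = f k'"
    have ee: "E (unit k) = E (unit k')" using e unfolding f_def by (rule tb_inj)
    have "E (\<lambda>i. unit k i + unit k' i) = (\<lambda>_. 0)"
      using add[OF unitV unitV] k k' ee by simp
    then have "(\<lambda>i. unit k i + unit k' i) = (\<lambda>_. 0)"
      using inj[of "\<lambda>i. unit k i + unit k' i"] k k' by (auto simp: Vn_def unit_def)
    then have "unit k k + unit k' k = 0" by (rule fun_cong)
    then show "k = k'" by (auto simp: unit_def split: if_splits)
  qed
  have vs: "J \<subseteq> {..<D} \<Longrightarrow> vsum (f ` J) = tb (E (ind J))" for J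
  proof -
    assume J: "J \<subseteq> {..<D}"
    have "vsum (f ` J) = tb (\<lambda>i. \<Sum>k\<in>J. E (unit k) i)"
      by (rule vsum_image) (use J finite_subset inj_on_subset[OF injf J] in \<open>auto simp: f_def\<close>)
    then show ?thesis using Eind[OF J] by simp
  qed
  show ?thesis unfolding has_dim_def
  proof (rule exI[of _ "f ` {..<D}"], intro conjI allI ballI impI)
    show "finite (f ` {..<D})" by simp
    show "f ` {..<D} \<subseteq> tb ` E ` Vn D" using unitV by (auto simp: f_def)
    show "card (f ` {..<D}) = D" using card_image[OF injf] by simp
  next
    fix S assume S: "S \<subseteq> f ` {..<D}" "S \<noteq> {}"
    define J where "J = {k\<in>{..<D}. f k \<in> S}"
    have SJ: "S = f ` J" using S(1) unfolding J_def by auto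
    have J: "J \<subseteq> {..<D}" unfolding J_def by auto
    have "J \<noteq> {}" using S SJ by auto
    show "vsum S \<noteq> vzero"
    proof
      assume "vsum S = vzero"
      then have "tb (E (ind J)) = tb (\<lambda>_. 0)" using vs[OF J] SJ vzero_tb by simp
      then have "E (ind J) = (\<lambda>_. 0)" by (rule tb_inj)
      then have "ind J = (\<lambda>_. 0)" using inj indV[OF J] by blast
      moreover obtain j where j: "j \<in> J" using \<open>J \<noteq> {}\<close> by blast
      moreover have "ind J j = 1" using j by (simp add: ind_def)
      ultimately show False by simp
    qed
  next
    fix x assume "x \<in> tb ` E ` Vn D"
    then obtain c where c: "c \<in> Vn D" "x = tb (E c)" by auto
    define J where "J = {k\<in>{..<D}. c k = 1}"
    have J: "J \<subseteq> {..<D}" unfolding J_def by auto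
    have "ind J = c"
    proof
      fix i show "ind J i = c i"
        using c(1) unfolding ind_def J_def Vn_def by (cases "c i") (auto simp: not_less[symmetric])
    qed
    then have "x = vsum (f ` J)" using vs[OF J] c by simp
    moreover have "f ` J \<subseteq> f ` {..<D}" using J by auto
    ultimately show "\<exists>S\<subseteq>f ` {..<D}. x = vsum S" by blast
  qed
qed


definition wt :: "nat \<Rightarrow> (nat \<Rightarrow> bit) \<Rightarrow> nat" where
  "wt n z = card {i. i < n \<and> z i \<noteq> 0}"

lemma tb_add: "vadd (tb X) (tb Y) = tb (\<lambda>i. X i + Y i)"
proof
  fix i show "vadd (tb X) (tb Y) i = tb (\<lambda>i. X i + Y i) i"
    unfolding vadd_def tb_def by (cases "X i"; cases "Y i") simp_all
qed

lemma bit_eq_of_sum0: "(x::bit) + y = 0 \<Longrightarrow> x = y"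
  by (cases x; cases y) simp_all

lemma symp_orth_tb: "symp_orth n (tb X) y \<longleftrightarrow> (\<Sum>i<n. X i * fb y (n+i) + X (n+i) * fb y i) = 0"
  using symp_orth_bit[of n "tb X" y] by simp

locale qc =
  fixes A G :: "nat \<Rightarrow> nat \<Rightarrow> bit" and a r t :: nat
begin

definition E :: "(nat \<Rightarrow> bit) \<Rightarrow> nat \<Rightarrow> bit" where
  "E c = (\<lambda>i. if i < a then c i
     else if i < a + r then (\<Sum>i'<a. A (i - a) i' * c i')
     else if i < a + r + a then (\<Sum>j<r. A j (i - (a + r)) * c (a + j)) + (\<Sum>l<t. G (i - (a + r)) l * c (a + r + l))
     else if i < 2 * (a + r) then c (i - (a + r))
     else 0)"

lemma E1: "i < a \<Longrightarrow> E c i = c i"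
  unfolding E_def by simp
lemma E2: "j < r \<Longrightarrow> E c (a + j) = (\<Sum>i'<a. A j i' * c i')"
  unfolding E_def by simp
lemma E3: "i < a \<Longrightarrow> E c (a + r + i) = (\<Sum>j<r. A j i * c (a + j)) + (\<Sum>l<t. G i l * c (a + r + l))"
  unfolding E_def by simp
lemma E4: "j < r \<Longrightarrow> E c (a + r + (a + j)) = c (a + j)"
  unfolding E_def by simp
lemma E5: "2 * (a + r) \<le> i \<Longrightarrow> E c i = 0"
  unfolding E_def by simp

lemma E_add: "E (\<lambda>i. x i + y i) = (\<lambda>i. E x i + E y i)"
  unfolding E_def by (rule ext) (simp add: distrib_left sum.distrib algebra_simps)

lemma E_zero: "E (\<lambda>_. 0) = (\<lambda>_. 0)"
  unfolding E_def by (rule ext) simp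

definition Cd :: "(nat \<Rightarrow> bool) set" where
  "Cd = tb ` E ` Vn (a + r + t)"

lemma osplit:
  "(\<Sum>i<a+r. X i * Y (a+r+i) + X (a+r+i) * Y i) =
    (\<Sum>i<a. X i * Y (a+r+i)) + (\<Sum>j<r. X (a+j) * Y (a+r+(a+j))) +
    ((\<Sum>i<a. X (a+r+i) * Y i) + (\<Sum>j<r. X (a+r+(a+j)) * Y (a+j)))"
  by (simp only: sum.distrib sum_split_add add.assoc add.left_commute)

lemma orth_E:
  "(\<Sum>i<a+r. E c i * Y (a+r+i) + E c (a+r+i) * Y i) =
    (\<Sum>i<a. c i * Y (a+r+i)) + (\<Sum>j<r. (\<Sum>i'<a. A j i' * c i') * Y (a+r+(a+j))) +
    ((\<Sum>i<a. ((\<Sum>j<r. A j i * c (a + j)) + (\<Sum>l<t. G i l * c (a + r + l))) * Y i)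
      + (\<Sum>j<r. c (a+j) * Y (a+j)))"
proof -
  have 1: "(\<Sum>i<a. E c i * Y (a+r+i)) = (\<Sum>i<a. c i * Y (a+r+i))"
    by (rule sum.cong) (simp_all add: E1)
  have 2: "(\<Sum>j<r. E c (a+j) * Y (a+r+(a+j))) = (\<Sum>j<r. (\<Sum>i'<a. A j i' * c i') * Y (a+r+(a+j)))"
    by (rule sum.cong) (simp_all add: E2)
  have 3: "(\<Sum>i<a. E c (a+r+i) * Y i) = (\<Sum>i<a. ((\<Sum>j<r. A j i * c (a + j)) + (\<Sum>l<t. G i l * c (a + r + l))) * Y i)"
    by (rule sum.cong) (simp_all add: E3)
  have 4: "(\<Sum>j<r. E c (a+r+(a+j)) * Y (a+j)) = (\<Sum>j<r. c (a+j) * Y (a+j))"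
    by (rule sum.cong) (simp_all add: E4)
  show ?thesis unfolding osplit 1 2 3 4 ..
qed

definition propA :: "nat \<Rightarrow> bool" where
  "propA d \<longleftrightarrow> (\<forall>z\<in>Vn (a+r). wt (a+r) z < d \<longrightarrow>
      (\<forall>j<r. z (a+j) = (\<Sum>i<a. A j i * z i)) \<longrightarrow> (\<forall>i<a. z i = 0))"

definition propG :: "nat \<Rightarrow> bool" where
  "propG d \<longleftrightarrow> (\<forall>z\<in>Vn (a+r). wt (a+r) z < d \<longrightarrow> (\<forall>w\<in>Vn t.
      (\<forall>i<a. z i = (\<Sum>j<r. A j i * z (a+j)) + (\<Sum>l<t. G i l * w l)) \<longrightarrow> (\<forall>l<t. w l = 0)))"

lemma orth_cons1:
  assumes "\<forall>x\<in>Cd. symp_orth (a+r) x y" "i0 < a"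
  shows "fb y (a+r+i0) = (\<Sum>j<r. A j i0 * fb y (a+r+(a+j)))"
proof -
  have "unit i0 \<in> Vn (a+r+t)" using assms(2) by (simp add: Vn_def unit_def)
  then have "symp_orth (a+r) (tb (E (unit i0))) y" using assms(1) unfolding Cd_def by blast
  then have "(\<Sum>i<a+r. E (unit i0) i * fb y (a+r+i) + E (unit i0) (a+r+i) * fb y i) = 0"
    by (simp add: symp_orth_tb)
  then have s: "(\<Sum>i<a. unit i0 i * fb y (a+r+i)) + (\<Sum>j<r. (\<Sum>i'<a. A j i' * unit i0 i') * fb y (a+r+(a+j))) +
    ((\<Sum>i<a. ((\<Sum>j<r. A j i * unit i0 (a + j)) + (\<Sum>l<t. G i l * unit i0 (a + r + l))) * fb y i)
      + (\<Sum>j<r. unit i0 (a+j) * fb y (a+j))) = 0" unfolding orth_E .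
  have u1: "unit i0 (a + j) = 0" for j using assms(2) by (simp add: unit_def)
  have u2: "unit i0 (a + r + l) = 0" for l using assms(2) by (simp add: unit_def)
  have "(\<Sum>i<a. unit i0 i * fb y (a+r+i)) = fb y (a+r+i0)" using assms(2) by (simp add: sum_unit_left)
  moreover have "(\<Sum>j<r. (\<Sum>i'<a. A j i' * unit i0 i') * fb y (a+r+(a+j))) = (\<Sum>j<r. A j i0 * fb y (a+r+(a+j)))"
    using assms(2) by (simp add: sum_unit_right)
  ultimately have "fb y (a+r+i0) + (\<Sum>j<r. A j i0 * fb y (a+r+(a+j))) = 0"
    using s by (simp add: u1 u2)
  then show ?thesis by (rule bit_eq_of_sum0)
qed

lemma orth_cons2:
  assumes "\<forall>x\<in>Cd. symp_orth (a+r) x y" "j0 < r"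
  shows "fb y (a+j0) = (\<Sum>i<a. A j0 i * fb y i)"
proof -
  have "unit (a+j0) \<in> Vn (a+r+t)" using assms(2) by (simp add: Vn_def unit_def)
  then have "symp_orth (a+r) (tb (E (unit (a+j0)))) y" using assms(1) unfolding Cd_def by blast
  then have "(\<Sum>i<a+r. E (unit (a+j0)) i * fb y (a+r+i) + E (unit (a+j0)) (a+r+i) * fb y i) = 0"
    by (simp add: symp_orth_tb)
  then have s: "(\<Sum>i<a. unit (a+j0) i * fb y (a+r+i)) + (\<Sum>j<r. (\<Sum>i'<a. A j i' * unit (a+j0) i') * fb y (a+r+(a+j))) +
    ((\<Sum>i<a. ((\<Sum>j<r. A j i * unit (a+j0) (a + j)) + (\<Sum>l<t. G i l * unit (a+j0) (a + r + l))) * fb y i)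
      + (\<Sum>j<r. unit (a+j0) (a+j) * fb y (a+j))) = 0" unfolding orth_E .
  have u0: "i < a \<Longrightarrow> unit (a+j0) i = 0" for i by (simp add: unit_def)
  have u1: "unit (a+j0) (a + j) = unit j0 j" for j by (simp add: unit_def)
  have u2: "unit (a+j0) (a + r + l) = 0" for l using assms(2) by (simp add: unit_def)
  have z1: "(\<Sum>i<a. unit (a+j0) i * fb y (a+r+i)) = 0" by (rule sum.neutral) (simp add: u0)
  have z2: "(\<Sum>j<r. (\<Sum>i'<a. A j i' * unit (a+j0) i') * fb y (a+r+(a+j))) = 0"
    by (rule sum.neutral) (auto intro!: sum.neutral simp: u0)
  have z3: "(\<Sum>i<a. ((\<Sum>j<r. A j i * unit (a+j0) (a + j)) + (\<Sum>l<t. G i l * unit (a+j0) (a + r + l))) * fb y i)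
      = (\<Sum>i<a. A j0 i * fb y i)"
    using assms(2) by (simp add: u1 u2 sum_unit_right)
  have z4: "(\<Sum>j<r. unit (a+j0) (a+j) * fb y (a+j)) = fb y (a+j0)"
    using assms(2) by (simp add: u1 sum_unit_left)
  have "(\<Sum>i<a. A j0 i * fb y i) + fb y (a+j0) = 0" using s unfolding z1 z2 z3 z4 by simp
  then show ?thesis by (metis bit_eq_of_sum0)
qed

end


context qc
begin

lemma fbE_vecs: "y \<in> vecs n \<Longrightarrow> 2 * n \<le> i \<Longrightarrow> fb y i = 0"
  by (simp add: vecs_def fb_def)

lemma perp_sub: "symp_perp (a+r) Cd \<subseteq> Cd"
proof
  fix y assume "y \<in> symp_perp (a+r) Cd"
  then have yv: "y \<in> vecs (a+r)" and orth: "\<forall>x\<in>Cd. symp_orth (a+r) x y" by (auto simp: symp_perp_def)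
  define Y where "Y = fb y"
  define c where "c = (\<lambda>i. if i < a then Y i else if i < a + r then Y (a + r + i) else 0)"
  have cV: "c \<in> Vn (a+r+t)" by (simp add: Vn_def c_def)
  have "E c = Y"
  proof
    fix i
    consider "i < a" | "a \<le> i \<and> i < a+r" | "a+r \<le> i \<and> i < a+r+a" | "a+r+a \<le> i \<and> i < 2*(a+r)" | "2*(a+r) \<le> i"
      by linarith
    then show "E c i = Y i"
    proof cases
      case 1 then show ?thesis by (simp add: E1 c_def)
    next
      case 2
      define j where "j = i - a"
      have j: "i = a + j" "j < r" using 2 unfolding j_def by auto
      have "E c (a+j) = (\<Sum>i'<a. A j i' * c i')" using j by (simp add: E2)
      also have "\<dots> = (\<Sum>i'<a. A j i' * Y i')" by (rule sum.cong) (simp_all add: c_def)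
      also have "\<dots> = Y (a+j)" using orth_cons2[OF orth j(2)] by (simp add: Y_def)
      finally show ?thesis using j by simp
    next
      case 3
      define i0 where "i0 = i - (a + r)"
      have j: "i = a + r + i0" "i0 < a" using 3 unfolding i0_def by auto
      have "E c (a+r+i0) = (\<Sum>j<r. A j i0 * c (a + j)) + (\<Sum>l<t. G i0 l * c (a + r + l))"
        using j by (simp add: E3)
      also have "(\<Sum>l<t. G i0 l * c (a + r + l)) = 0" by (simp add: c_def)
      also have "(\<Sum>j<r. A j i0 * c (a + j)) = (\<Sum>j<r. A j i0 * Y (a+r+(a + j)))"
        by (rule sum.cong) (simp_all add: c_def)
      also have "\<dots> + 0 = Y (a+r+i0)" using orth_cons1[OF orth j(2)] by (simp add: Y_def)
      finally show ?thesis using j by simp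
    next
      case 4
      define j where "j = i - (a + r + a)"
      have j: "i = a + r + (a + j)" "j < r" using 4 unfolding j_def by auto
      have "E c (a + r + (a + j)) = c (a + j)" using j by (simp add: E4)
      also have "\<dots> = Y (a + r + (a + j))" using j by (simp add: c_def)
      finally show ?thesis using j by simp
    next
      case 5
      then show ?thesis using fbE_vecs[OF yv] by (simp add: E5 Y_def)
    qed
  qed
  then have "y = tb (E c)" by (simp add: Y_def)
  then show "y \<in> Cd" unfolding Cd_def using cV by blast
qed

lemma inj_E:
  assumes pG: "propG d" and d: "1 \<le> d" and cV: "c \<in> Vn (a+r+t)" and E0: "E c = (\<lambda>_. 0)"
  shows "c = (\<lambda>_. 0)"
proof -
  have c1: "i < a \<Longrightarrow> c i = 0" for i using E1[of i c] E0 by simp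
  have c2: "j < r \<Longrightarrow> c (a + j) = 0" for j using E4[of j c] E0 by simp
  define w where "w = (\<lambda>l. if l < t then c (a + r + l) else 0)"
  have wV: "w \<in> Vn t" by (simp add: w_def Vn_def)
  have z: "(\<lambda>_. 0::bit) \<in> Vn (a+r)" by (simp add: Vn_def)
  have wz: "wt (a+r) (\<lambda>_. 0) < d" using d by (simp add: wt_def)
  have rel: "\<forall>i<a. (0::bit) = (\<Sum>j<r. A j i * 0) + (\<Sum>l<t. G i l * w l)"
  proof (intro allI impI)
    fix i assume i: "i < a"
    have "0 = E c (a + r + i)" using E0 by simp
    also have "\<dots> = (\<Sum>j<r. A j i * c (a + j)) + (\<Sum>l<t. G i l * c (a + r + l))" using i by (simp add: E3)
    also have "(\<Sum>j<r. A j i * c (a + j)) = 0" by (simp add: c2)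
    also have "(\<Sum>l<t. G i l * c (a + r + l)) = (\<Sum>l<t. G i l * w l)" by (rule sum.cong) (simp_all add: w_def)
    finally show "(0::bit) = (\<Sum>j<r. A j i * 0) + (\<Sum>l<t. G i l * w l)" by simp
  qed
  have "\<forall>l<t. w l = 0" using pG z wz wV rel unfolding propG_def by auto
  then have c3: "l < t \<Longrightarrow> c (a + r + l) = 0" for l by (simp add: w_def)
  show ?thesis
  proof
    fix i
    consider "i < a" | "a \<le> i \<and> i < a+r" | "a+r \<le> i \<and> i < a+r+t" | "a+r+t \<le> i" by linarith
    then show "c i = 0"
    proof cases
      case 1 then show ?thesis by (rule c1)
    next
      case 2 then have "i - a < r" by linarith
      then show ?thesis using c2[of "i - a"] 2 by simp
    next
      case 3 then have "i - (a + r) < t" by linarith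
      then show ?thesis using c3[of "i - (a + r)"] 3 by simp
    next
      case 4 then show ?thesis using cV by (simp add: Vn_def)
    qed
  qed
qed

lemma Cd_subspace: "is_subspace (a+r) Cd"
  unfolding is_subspace_def
proof (intro conjI ballI)
  show "Cd \<subseteq> vecs (a+r)" unfolding Cd_def vecs_def tb_def by (auto simp: E5)
  have "(\<lambda>_. 0::bit) \<in> Vn (a+r+t)" by (simp add: Vn_def)
  then show "vzero \<in> Cd" unfolding Cd_def vzero_tb using E_zero by (metis image_eqI)
next
  fix x y assume "x \<in> Cd" "y \<in> Cd"
  then obtain c c' where c: "c \<in> Vn (a+r+t)" "x = tb (E c)" and c': "c' \<in> Vn (a+r+t)" "y = tb (E c')"
    unfolding Cd_def by blast
  have "vadd x y = tb (E (\<lambda>i. c i + c' i))" unfolding c c' tb_add E_add ..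
  moreover have "(\<lambda>i. c i + c' i) \<in> Vn (a+r+t)" using c c' by (simp add: Vn_def)
  ultimately show "vadd x y \<in> Cd" unfolding Cd_def by blast
qed

lemma Cd_dim: assumes "propG d" "1 \<le> d" shows "has_dim Cd (a+r+t)"
  unfolding Cd_def
  by (rule has_dim_image) (use E_add inj_E[OF assms] in auto)

end


context qc
begin

lemma wt_le_sweight1:
  "wt (a+r) (\<lambda>i. if i < a + r then X i else 0) \<le> sweight (a+r) (tb X)"
  unfolding wt_def sweight_def
  by (rule card_mono) (auto simp: tb_def)

lemma wt_le_sweight2:
  "wt (a+r) (\<lambda>i. if i < a + r then X (a + r + i) else 0) \<le> sweight (a+r) (tb X)"
  unfolding wt_def sweight_def
  by (rule card_mono) (auto simp: tb_def)

lemma swap_lemma: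
  "(\<Sum>i<a. c' i * (\<Sum>j<r. A j i * c (a + j))) = (\<Sum>j<r. (\<Sum>i'<a. A j i' * c' i') * c (a + j))"
proof -
  have "(\<Sum>i<a. c' i * (\<Sum>j<r. A j i * c (a + j))) = (\<Sum>i<a. \<Sum>j<r. A j i * c' i * c (a + j))"
    by (simp add: sum_distrib_left ac_simps)
  also have "\<dots> = (\<Sum>j<r. \<Sum>i<a. A j i * c' i * c (a + j))" by (rule sum.swap)
  also have "\<dots> = (\<Sum>j<r. (\<Sum>i'<a. A j i' * c' i') * c (a + j))" by (simp add: sum_distrib_right)
  finally show ?thesis .
qed

lemma low_in_perp:
  assumes pA: "propA d" and pG: "propG d" and cV: "c \<in> Vn (a+r+t)"
    and sw: "sweight (a+r) (tb (E c)) < d"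
  shows "tb (E c) \<in> symp_perp (a+r) Cd"
proof -
  define Z1 where "Z1 = (\<lambda>i. if i < a + r then E c i else 0)"
  define Z2 where "Z2 = (\<lambda>i. if i < a + r then E c (a + r + i) else 0)"
  have Z1V: "Z1 \<in> Vn (a+r)" by (simp add: Z1_def Vn_def)
  have Z2V: "Z2 \<in> Vn (a+r)" by (simp add: Z2_def Vn_def)
  have w1: "wt (a+r) Z1 < d" using wt_le_sweight1[of "E c"] sw unfolding Z1_def by linarith
  have w2: "wt (a+r) Z2 < d" using wt_le_sweight2[of "E c"] sw unfolding Z2_def by linarith
  have rel1: "\<forall>j<r. Z1 (a+j) = (\<Sum>i<a. A j i * Z1 i)"
  proof (intro allI impI)
    fix j assume j: "j < r"
    have "Z1 (a+j) = (\<Sum>i'<a. A j i' * c i')" using j by (simp add: Z1_def E2)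
    also have "\<dots> = (\<Sum>i<a. A j i * Z1 i)" by (rule sum.cong) (simp_all add: Z1_def E1)
    finally show "Z1 (a+j) = (\<Sum>i<a. A j i * Z1 i)" .
  qed
  have "\<forall>i<a. Z1 i = 0" using pA Z1V w1 rel1 unfolding propA_def by blast
  then have cx: "i < a \<Longrightarrow> c i = 0" for i by (simp add: Z1_def E1)
  define w where "w = (\<lambda>l. if l < t then c (a + r + l) else 0)"
  have wV: "w \<in> Vn t" by (simp add: w_def Vn_def)
  have rel2: "\<forall>i<a. Z2 i = (\<Sum>j<r. A j i * Z2 (a+j)) + (\<Sum>l<t. G i l * w l)"
  proof (intro allI impI)
    fix i assume i: "i < a"
    have "Z2 i = (\<Sum>j<r. A j i * c (a + j)) + (\<Sum>l<t. G i l * c (a + r + l))"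
      using i by (simp add: Z2_def E3)
    also have "(\<Sum>j<r. A j i * c (a + j)) = (\<Sum>j<r. A j i * Z2 (a+j))"
      by (rule sum.cong) (simp_all add: Z2_def E4)
    also have "(\<Sum>l<t. G i l * c (a + r + l)) = (\<Sum>l<t. G i l * w l)"
      by (rule sum.cong) (simp_all add: w_def)
    finally show "Z2 i = (\<Sum>j<r. A j i * Z2 (a+j)) + (\<Sum>l<t. G i l * w l)" .
  qed
  have "\<forall>l<t. w l = 0" using pG Z2V w2 wV rel2 unfolding propG_def by blast
  then have cw: "l < t \<Longrightarrow> c (a + r + l) = 0" for l by (simp add: w_def)
  have Ex: "i < a + r \<Longrightarrow> E c i = 0" for i
  proof -
    assume i: "i < a + r"
    show ?thesis
    proof (cases "i < a")
      case True then show ?thesis by (simp add: E1 cx)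
    next
      case False
      then obtain j where j: "i = a + j" "j < r" using i by (metis add_diff_inverse_nat add_less_cancel_left)
      then show ?thesis by (simp add: E2 cx)
    qed
  qed
  show ?thesis
    unfolding symp_perp_def
  proof (intro CollectI conjI ballI)
    show "tb (E c) \<in> vecs (a + r)" unfolding vecs_def tb_def by (auto simp: E5)
  next
    fix x assume "x \<in> Cd"
    then obtain c' where c': "x = tb (E c')" unfolding Cd_def by blast
    have S1: "(\<Sum>i<a. c' i * E c (a+r+i)) = (\<Sum>i<a. c' i * (\<Sum>j<r. A j i * c (a + j)))"
      by (rule sum.cong) (simp_all add: E3 cw)
    have S2: "(\<Sum>j<r. (\<Sum>i'<a. A j i' * c' i') * E c (a+r+(a+j))) = (\<Sum>j<r. (\<Sum>i'<a. A j i' * c' i') * c (a + j))"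
      by (rule sum.cong) (simp_all add: E4)
    have S3: "(\<Sum>i<a. ((\<Sum>j<r. A j i * c' (a + j)) + (\<Sum>l<t. G i l * c' (a + r + l))) * E c i) = 0"
      by (rule sum.neutral) (simp add: Ex)
    have S4: "(\<Sum>j<r. c' (a+j) * E c (a+j)) = 0"
      by (rule sum.neutral) (simp add: Ex)
    have "(\<Sum>i<a+r. E c' i * E c (a+r+i) + E c' (a+r+i) * E c i) = 0"
      unfolding orth_E S1 S2 S3 S4 swap_lemma by simp
    then show "symp_orth (a + r) x (tb (E c))" unfolding c' symp_orth_tb by simp
  qed
qed

lemma nonempty_witness:
  assumes pG: "propG d" and d: "1 \<le> d" and t: "1 \<le> t"
  shows "tb (E (unit (a+r))) \<in> Cd - symp_perp (a+r) Cd"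
proof
  have uV: "unit (a+r) \<in> Vn (a+r+t)" using t by (simp add: Vn_def unit_def)
  then show "tb (E (unit (a+r))) \<in> Cd" unfolding Cd_def by blast
  show "tb (E (unit (a+r))) \<notin> symp_perp (a+r) Cd"
  proof
    assume "tb (E (unit (a+r))) \<in> symp_perp (a+r) Cd"
    then have orth: "\<forall>x\<in>Cd. symp_orth (a+r) x (tb (E (unit (a+r))))" by (simp add: symp_perp_def)
    have G0: "G i0 0 = 0" if i0: "i0 < a" for i0
    proof -
      have e: "E (unit (a+r)) (a+r+i0) = (\<Sum>j<r. A j i0 * E (unit (a+r)) (a+r+(a+j)))"
        using orth_cons1[OF orth i0] by simp
      have "(\<Sum>j<r. A j i0 * E (unit (a+r)) (a+r+(a+j))) = 0"
        by (rule sum.neutral) (simp add: E4 unit_def)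
      moreover have "E (unit (a+r)) (a+r+i0) = G i0 0"
      proof -
        have "E (unit (a+r)) (a+r+i0) = (\<Sum>j<r. A j i0 * unit (a+r) (a + j)) + (\<Sum>l<t. G i0 l * unit (a+r) (a + r + l))"
          using i0 by (simp add: E3)
        also have "(\<Sum>j<r. A j i0 * unit (a+r) (a + j)) = 0" by (rule sum.neutral) (simp add: unit_def)
        also have "(\<Sum>l<t. G i0 l * unit (a+r) (a + r + l)) = (\<Sum>l<t. G i0 l * unit 0 l)"
          by (rule sum.cong) (simp_all add: unit_def)
        also have "\<dots> = G i0 0" using t by (simp add: sum_unit_right)
        finally show ?thesis by simp
      qed
      ultimately show ?thesis using e by simp
    qed
    have z: "(\<lambda>_. 0::bit) \<in> Vn (a+r)" by (simp add: Vn_def)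
    have wz: "wt (a+r) (\<lambda>_. 0) < d" using d by (simp add: wt_def)
    have wV: "unit 0 \<in> Vn t" using t by (simp add: Vn_def unit_def)
    have rel: "\<forall>i<a. (0::bit) = (\<Sum>j<r. A j i * 0) + (\<Sum>l<t. G i l * unit 0 l)"
      using t G0 by (simp add: sum_unit_right)
    have "\<forall>l<t. unit 0 l = 0" using pG z wz wV rel unfolding propG_def by blast
    then have "unit 0 0 = 0" using t by auto
    then show False by (simp add: unit_def)
  qed
qed

lemma construct:
  assumes pA: "propA d" and pG: "propG d" and d: "1 \<le> d" and t: "1 \<le> t"
  shows "stabilizer_code (a+r) t Cd \<and> d \<le> min_dist (a+r) Cd"
proof
  show "stabilizer_code (a+r) t Cd"
    unfolding stabilizer_code_def using Cd_subspace Cd_dim[OF pG d] perp_sub by simp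
  have ne: "sweight (a+r) ` (Cd - symp_perp (a+r) Cd) \<noteq> {}"
    using nonempty_witness[OF pG d t] by blast
  have ge: "\<forall>s\<in>sweight (a+r) ` (Cd - symp_perp (a+r) Cd). d \<le> s"
  proof
    fix s assume "s \<in> sweight (a+r) ` (Cd - symp_perp (a+r) Cd)"
    then obtain y where y: "y \<in> Cd" "y \<notin> symp_perp (a+r) Cd" "s = sweight (a+r) y" by blast
    then obtain c where c: "c \<in> Vn (a+r+t)" "y = tb (E c)" unfolding Cd_def by blast
    show "d \<le> s"
    proof (rule ccontr)
      assume "\<not> d \<le> s"
      then have "sweight (a+r) (tb (E c)) < d" using y c by simp
      then have "y \<in> symp_perp (a+r) Cd" using low_in_perp[OF pA pG c(1)] c by simp
      then show False using y by simp
    qed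
  qed
  show "d \<le> min_dist (a+r) Cd"
    unfolding min_dist_def by (rule cInf_greatest[OF ne]) (use ge in blast)
qed

end


definition V :: "nat \<Rightarrow> nat \<Rightarrow> nat" where
  "V n d = card {z\<in>Vn n. wt n z < d}"

lemma bit_solve: "(x::bit) = y + s \<Longrightarrow> s = x + y"
  by (cases x; cases y; cases s) simp_all

lemma pow_split: "1 \<le> a \<Longrightarrow> ((2::nat) ^ a) ^ r = 2 ^ r * (2 ^ (a - 1)) ^ r"
proof -
  assume "1 \<le> a"
  then have "(2::nat) ^ a = 2 * 2 ^ (a - 1)" by (metis Suc_diff_le diff_Suc_1 power_Suc)
  then show ?thesis by (simp add: power_mult_distrib)
qed

lemma exists_A:
  assumes a: "1 \<le> a" and Vr: "V (a+r) d < 2 ^ r"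
  shows "\<exists>A. qc.propA A a r d"
proof -
  define Idx where "Idx = {z\<in>Vn (a+r). wt (a+r) z < d \<and> (\<exists>i<a. z i \<noteq> 0)}"
  define Ev where "Ev z = {M\<in>Mats r a. \<forall>j<r. (\<Sum>i<a. M j i * z i) = z (a+j)}" for z
  have finI: "finite Idx" unfolding Idx_def using finite_Vn by simp
  have cardI: "card Idx \<le> V (a+r) d" unfolding V_def Idx_def
    by (rule card_mono) (use finite_Vn in auto)
  have cardE: "card (Ev z) \<le> (2 ^ (a - 1)) ^ r" if z: "z \<in> Idx" for z
  proof -
    from z obtain i0 where i0: "i0 < a" "z i0 = 1" unfolding Idx_def by auto
    show ?thesis unfolding Ev_def using event_count[of i0 a z r "\<lambda>j. z (a + j)", OF i0] by simp
  qed
  have "card Idx * (2 ^ (a - 1)) ^ r \<le> V (a+r) d * (2 ^ (a - 1)) ^ r" using cardI by simp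
  also have "\<dots> < 2 ^ r * (2 ^ (a - 1)) ^ r" using Vr by simp
  also have "\<dots> = card (Mats r a)" by (simp add: card_Mats pow_split[OF a])
  finally have lt: "card Idx * (2 ^ (a - 1)) ^ r < card (Mats r a)" .
  obtain M where M: "M \<in> Mats r a" "\<forall>z\<in>Idx. M \<notin> Ev z"
  proof -
    have sE: "\<And>z. z \<in> Idx \<Longrightarrow> Ev z \<subseteq> Mats r a" unfolding Ev_def by auto
    show ?thesis using exists_avoid[where E=Ev, OF finI sE cardE finite_Mats lt] that by blast
  qed
  have "qc.propA M a r d"
    unfolding qc.propA_def
  proof (intro ballI impI allI)
    fix z i assume z: "z \<in> Vn (a+r)" "wt (a+r) z < d" and rel: "\<forall>j<r. z (a + j) = (\<Sum>i<a. M j i * z i)" and i: "i < a"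
    show "z i = 0"
    proof (rule ccontr)
      assume "z i \<noteq> 0"
      then have "z \<in> Idx" unfolding Idx_def using z i by auto
      moreover have "M \<in> Ev z" unfolding Ev_def using M(1) rel by simp
      ultimately show False using M(2) by blast
    qed
  qed
  then show ?thesis by blast
qed

lemma exists_G:
  assumes t: "1 \<le> t" and Vt: "V (a+r) d * 2 ^ t < 2 ^ a"
  shows "\<exists>G. qc.propG A G a r t d"
proof -
  define Idx where "Idx = {(z, w). z\<in>Vn (a+r) \<and> wt (a+r) z < d \<and> w \<in> Vn t \<and> (\<exists>l<t. w l \<noteq> 0)}"
  define Ev where "Ev p = {M\<in>Mats a t. \<forall>i<a. (\<Sum>l<t. M i l * snd p l) = fst p i + (\<Sum>j<r. A j i * fst p (a+j))}" for p
  have sub: "Idx \<subseteq> {z\<in>Vn (a+r). wt (a+r) z < d} \<times> Vn t" unfolding Idx_def by auto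
  have finI: "finite Idx" by (rule finite_subset[OF sub]) (simp add: finite_Vn)
  have cardI: "card Idx \<le> V (a+r) d * 2 ^ t"
  proof -
    have "card Idx \<le> card ({z\<in>Vn (a+r). wt (a+r) z < d} \<times> Vn t)"
      by (rule card_mono[OF _ sub]) (simp add: finite_Vn)
    also have "\<dots> = V (a+r) d * 2 ^ t" by (simp add: V_def card_Vn card_cartesian_product)
    finally show ?thesis .
  qed
  have cardE: "card (Ev p) \<le> (2 ^ (t - 1)) ^ a" if p: "p \<in> Idx" for p
  proof -
    from p obtain z w where zw: "p = (z, w)" and "\<exists>l<t. w l \<noteq> 0" unfolding Idx_def by auto
    then obtain l0 where l0: "l0 < t" "w l0 = 1" by auto
    show ?thesis unfolding Ev_def zw
      using event_count[of l0 t w a "\<lambda>i. z i + (\<Sum>j<r. A j i * z (a+j))", OF l0] by simp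
  qed
  have "card Idx * (2 ^ (t - 1)) ^ a \<le> V (a+r) d * 2 ^ t * (2 ^ (t - 1)) ^ a" using cardI by simp
  also have "\<dots> < 2 ^ a * (2 ^ (t - 1)) ^ a" using Vt by simp
  also have "\<dots> = card (Mats a t)" by (simp add: card_Mats pow_split[OF t])
  finally have lt: "card Idx * (2 ^ (t - 1)) ^ a < card (Mats a t)" .
  obtain M where M: "M \<in> Mats a t" "\<forall>p\<in>Idx. M \<notin> Ev p"
  proof -
    have sE: "\<And>z. z \<in> Idx \<Longrightarrow> Ev z \<subseteq> Mats a t" unfolding Ev_def by auto
    show ?thesis using exists_avoid[where E=Ev, OF finI sE cardE finite_Mats lt] that by blast
  qed
  have "qc.propG A M a r t d"
    unfolding qc.propG_def
  proof (intro ballI impI allI)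
    fix z w l assume z: "z \<in> Vn (a+r)" "wt (a+r) z < d" and w: "w \<in> Vn t"
      and rel: "\<forall>i<a. z i = (\<Sum>j<r. A j i * z (a + j)) + (\<Sum>l<t. M i l * w l)" and l: "l < t"
    show "w l = 0"
    proof (rule ccontr)
      assume "w l \<noteq> 0"
      then have "(z, w) \<in> Idx" unfolding Idx_def using z w l by auto
      moreover have "M \<in> Ev (z, w)" unfolding Ev_def
      proof (simp add: M(1), intro allI impI)
        fix i assume "i < a"
        then have "z i = (\<Sum>j<r. A j i * z (a + j)) + (\<Sum>l<t. M i l * w l)" using rel by blast
        then show "(\<Sum>l<t. M i l * w l) = z i + (\<Sum>j<r. A j i * z (a + j))" by (rule bit_solve)
      qed
      ultimately show False using M(2) by blast
    qed
  qed
  then show ?thesis by blast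
qed


lemma code_exists:
  assumes d: "1 \<le> d" and Vs: "V n d \<le> 2 ^ s" and n: "2 * s + 3 \<le> n"
  shows "\<exists>C. stabilizer_code n (n - (2 * s + 2)) C \<and> d \<le> min_dist n C"
proof -
  define r where "r = s + 1"
  define a where "a = n - (s + 1)"
  define t where "t = n - (2 * s + 2)"
  have nar: "a + r = n" using n unfolding a_def r_def by simp
  have a1: "1 \<le> a" using n unfolding a_def by simp
  have t1: "1 \<le> t" using n unfolding t_def by simp
  have "(2::nat) ^ s < 2 ^ r" unfolding r_def by simp
  then have Vr: "V (a+r) d < 2 ^ r" unfolding nar using Vs by linarith
  have st: "s + t < a" using n unfolding t_def a_def by simp
  have "V (a+r) d * 2 ^ t \<le> 2 ^ s * 2 ^ t" unfolding nar using Vs by simp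
  also have "\<dots> = 2 ^ (s + t)" by (simp add: power_add)
  also have "\<dots> < 2 ^ a" using st by (simp add: power_strict_increasing)
  finally have Vt: "V (a+r) d * 2 ^ t < 2 ^ a" .
  obtain A where pA: "qc.propA A a r d" using exists_A[OF a1 Vr] by blast
  obtain G where pG: "qc.propG A G a r t d" using exists_G[OF t1 Vt] by blast
  have "stabilizer_code (a+r) t (qc.Cd A G a r t) \<and> d \<le> min_dist (a+r) (qc.Cd A G a r t)"
    by (rule qc.construct[OF pA pG d t1])
  then show ?thesis unfolding nar t_def by blast
qed

lemma V_one: "V n 1 \<le> 1"
proof -
  have "{z\<in>Vn n. wt n z < 1} \<subseteq> {(\<lambda>_. 0)}"
  proof
    fix z assume z: "z \<in> {z\<in>Vn n. wt n z < 1}"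
    then have "card {i. i < n \<and> z i \<noteq> 0} = 0" by (simp add: wt_def)
    then have "{i. i < n \<and> z i \<noteq> 0} = {}" by simp
    then have "z = (\<lambda>_. 0)" using z by (auto simp: Vn_def fun_eq_iff not_less[symmetric])
    then show "z \<in> {(\<lambda>_. 0)}" by simp
  qed
  then have "{z\<in>Vn n. wt n z < 1} = {} \<or> {z\<in>Vn n. wt n z < 1} = {(\<lambda>_. 0)}" by (rule subset_singletonD)
  then have "card {z\<in>Vn n. wt n z < 1} \<le> 1"
  proof
    assume h: "{z\<in>Vn n. wt n z < 1} = {}"
    show ?thesis by (simp only: h card.empty)
  next
    assume h: "{z\<in>Vn n. wt n z < 1} = {(\<lambda>_. 0)}"
    show ?thesis by (simp only: h) simp
  qed
  then show ?thesis unfolding V_def .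
qed

lemma V_le_binom: "V n d \<le> (\<Sum>j<d. n choose j)"
proof -
  define supp where "supp z = {i. i < n \<and> z i \<noteq> (0::bit)}" for z
  have inj: "inj_on supp {z\<in>Vn n. wt n z < d}"
  proof (rule inj_onI)
    fix z z' assume z: "z \<in> {z\<in>Vn n. wt n z < d}" and z': "z' \<in> {z\<in>Vn n. wt n z < d}" and e: "supp z = supp z'"
    show "z = z'"
    proof
      fix i show "z i = z' i"
      proof (cases "i < n")
        case True
        then have "z i \<noteq> 0 \<longleftrightarrow> z' i \<noteq> 0" using e unfolding supp_def by blast
        then show ?thesis by (cases "z i"; cases "z' i") simp_all
      next
        case False then show ?thesis using z z' by (simp add: Vn_def)
      qed
    qed
  qed
  have sub: "supp ` {z\<in>Vn n. wt n z < d} \<subseteq> (\<Union>j<d. {S. S \<subseteq> {..<n} \<and> card S = j})"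
    by (auto simp: supp_def wt_def)
  have "V n d = card (supp ` {z\<in>Vn n. wt n z < d})" unfolding V_def using card_image[OF inj] by simp
  also have "\<dots> \<le> card (\<Union>j<d. {S. S \<subseteq> {..<n} \<and> card S = j})"
  proof (rule card_mono[OF _ sub])
    have "(\<Union>j<d. {S. S \<subseteq> {..<n} \<and> card S = j}) \<subseteq> Pow {..<n}" by blast
    then show "finite (\<Union>j<d. {S. S \<subseteq> {..<n} \<and> card S = j})" by (rule finite_subset) simp
  qed
  also have "\<dots> \<le> (\<Sum>j<d. card {S. S \<subseteq> {..<n} \<and> card S = j})" by (rule card_UN_le) simp
  also have "\<dots> = (\<Sum>j<d. n choose j)" by (simp add: n_subsets)
  finally show ?thesis .
qed

lemma binom_bound:
  fixes \<delta> :: real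
  assumes dp: "0 < \<delta>" and d1: "\<delta> \<le> 1"
  shows "real (\<Sum>j<nat \<lceil>\<delta> * n\<rceil>. n choose j) \<le> exp (\<delta> * n) / \<delta> powr (\<delta> * n)"
proof -
  define d where "d = nat \<lceil>\<delta> * n\<rceil>"
  have dn: "d \<le> n"
  proof -
    have "\<delta> * real n \<le> 1 * real n" using d1 by (intro mult_right_mono) auto
    then show ?thesis unfolding d_def by simp
  qed
  have jle: "j < d \<Longrightarrow> real j \<le> \<delta> * n" for j
  proof -
    assume "j < d"
    then have "int j < \<lceil>\<delta> * n\<rceil>" unfolding d_def by simp
    then have "real_of_int (int j) < \<delta> * n" by (simp only: less_ceiling_iff)
    then show ?thesis by simp
  qed
  have pos: "0 < \<delta> powr (\<delta> * n)" using dp by simp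
  have "\<delta> powr (\<delta> * n) * real (\<Sum>j<d. n choose j) = (\<Sum>j<d. real (n choose j) * \<delta> powr (\<delta> * n))"
    by (simp add: sum_distrib_left mult.commute)
  also have "\<dots> \<le> (\<Sum>j<d. real (n choose j) * \<delta> ^ j)"
  proof (rule sum_mono)
    fix j assume "j \<in> {..<d}"
    then have "\<delta> powr (\<delta> * n) \<le> \<delta> powr (real j)" using jle dp d1 by (intro powr_mono') auto
    also have "\<dots> = \<delta> ^ j" using dp by (simp add: powr_realpow)
    finally show "real (n choose j) * \<delta> powr (\<delta> * n) \<le> real (n choose j) * \<delta> ^ j"
      by (simp add: mult_left_mono)
  qed
  also have "\<dots> \<le> (\<Sum>j\<le>n. real (n choose j) * \<delta> ^ j)"
    by (rule sum_mono2) (use dn dp in auto)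
  also have "\<dots> = (\<delta> + 1) ^ n" by (simp add: binomial_ring[of \<delta> 1 n] mult.commute)
  also have "\<dots> \<le> exp \<delta> ^ n" using dp by (intro power_mono) (auto simp: add.commute)
  also have "\<dots> = exp (\<delta> * n)" by (simp add: exp_of_nat_mult[symmetric] mult.commute)
  finally have "\<delta> powr (\<delta> * n) * real (\<Sum>j<d. n choose j) \<le> exp (\<delta> * n)" .
  then show ?thesis unfolding d_def[symmetric] using pos by (simp add: field_simps)
qed

lemma powr_ident:
  fixes \<delta> :: real
  assumes "0 < \<delta>"
  shows "exp (\<delta> * n) / \<delta> powr (\<delta> * n) = 2 powr (\<delta> * (1 - ln \<delta>) / ln 2 * n)"
proof -
  have "exp (\<delta> * n) / \<delta> powr (\<delta> * n) = exp (\<delta> * n - \<delta> * n * ln \<delta>)"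
    using assms by (simp add: powr_def exp_diff)
  also have "\<dots> = 2 powr (\<delta> * (1 - ln \<delta>) / ln 2 * n)"
  proof -
    have l2: "0 < ln (2::real)" by simp
    have "\<delta> * (1 - ln \<delta>) / ln 2 * n * ln 2 = \<delta> * n - \<delta> * n * ln \<delta>"
      using l2 by (simp add: field_simps)
    then show ?thesis by (simp add: powr_def)
  qed
  finally show ?thesis .
qed

lemma V_bound:
  fixes \<delta> :: real
  assumes dp: "0 < \<delta>" and d1: "\<delta> \<le> 1"
  shows "V n (nat \<lceil>\<delta> * n\<rceil>) \<le> 2 ^ nat \<lceil>\<delta> * (1 - ln \<delta>) / ln 2 * n\<rceil>"
proof -
  define \<beta> where "\<beta> = \<delta> * (1 - ln \<delta>) / ln 2"
  have "real (V n (nat \<lceil>\<delta> * n\<rceil>)) \<le> real (\<Sum>j<nat \<lceil>\<delta> * n\<rceil>. n choose j)"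
    using V_le_binom by (simp only: of_nat_le_iff)
  also have "\<dots> \<le> 2 powr (\<beta> * n)" using binom_bound[OF dp d1, of n] powr_ident[OF dp, of n]
    unfolding \<beta>_def by simp
  also have "\<dots> \<le> 2 powr (real (nat \<lceil>\<beta> * n\<rceil>))"
    by (rule powr_mono) (simp_all add: real_nat_ceiling_ge)
  also have "\<dots> = 2 ^ nat \<lceil>\<beta> * n\<rceil>" by (simp add: powr_realpow)
  finally have "real (V n (nat \<lceil>\<delta> * n\<rceil>)) \<le> 2 ^ nat \<lceil>\<beta> * n\<rceil>" .
  then have "real (V n (nat \<lceil>\<delta> * n\<rceil>)) \<le> real (2 ^ nat \<lceil>\<beta> * n\<rceil>)" by simp
  then show ?thesis unfolding \<beta>_def by (simp only: of_nat_le_iff)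
qed


lemma half_lt_ln2: "1/2 < ln (2::real)"
proof -
  have e: "exp (1/2::real) * exp (1/2) = exp 1" by (simp flip: exp_add)
  have "exp (1/2::real) < 2"
  proof (rule ccontr)
    assume "\<not> exp (1/2::real) < 2"
    then have "2 \<le> exp (1/2::real)" by simp
    then have "2 * 2 \<le> exp (1/2::real) * exp (1/2)" by (intro mult_mono) auto
    then show False using e exp_le by simp
  qed
  then have "ln (exp (1/2::real)) < ln 2" by (subst ln_less_cancel_iff) auto
  then show ?thesis by simp
qed

lemma key_ineq:
  fixes m :: nat and \<delta> :: real
  assumes m: "m \<ge> 2" and dp: "0 < \<delta>"
  shows "2 * (\<delta> * (1 - ln \<delta>) / ln 2) < 10/3 * real m * \<delta> + 2 / (2^m - 1)"
proof -
  define c where "c = 5/3 * real m * ln 2"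
  define K where "K = exp (-c)"
  have l2: "0 < ln (2::real)" by simp
  have Kp: "0 < K" by (simp add: K_def)
  have "ln (K/\<delta>) \<le> K/\<delta> - 1" by (rule ln_le_minus_one) (simp add: Kp dp)
  moreover have "ln (K/\<delta>) = -c - ln \<delta>" using Kp dp by (simp add: ln_div K_def)
  ultimately have "1 - c - ln \<delta> \<le> K/\<delta>" by simp
  then have "\<delta> * (1 - c - ln \<delta>) \<le> \<delta> * (K/\<delta>)" using dp by (intro mult_left_mono) auto
  then have A: "\<delta> * (1 - ln \<delta>) - \<delta> * c \<le> K" using dp by (simp add: algebra_simps)
  have B: "2 * (\<delta> * (1 - ln \<delta>) / ln 2) - 10/3 * real m * \<delta> = 2 / ln 2 * (\<delta> * (1 - ln \<delta>) - \<delta> * c)"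
    using l2 by (simp add: c_def field_simps)
  have C: "2 * (\<delta> * (1 - ln \<delta>) / ln 2) - 10/3 * real m * \<delta> \<le> 2 / ln 2 * K"
    unfolding B using A l2 by (intro mult_left_mono) auto
  have pm: "(4::real) \<le> 2 ^ m"
  proof -
    have "(2::real) ^ 2 \<le> 2 ^ m" using m by (intro power_increasing) auto
    then show ?thesis by simp
  qed
  have p2: "(2::real) ^ m = exp (real m * ln 2)" by (simp add: exp_of_nat_mult)
  have "K * 2 ^ m = exp (-(2/3) * real m * ln 2)"
    unfolding p2 K_def c_def by (simp flip: exp_add)
  also have "\<dots> \<le> exp (-(4/3) * ln 2)" using m l2 by simp
  also have "\<dots> < exp (- ln 2)" using l2 by simp
  also have "\<dots> = 1/2" by (simp add: exp_minus)
  finally have "K * 2 ^ m < ln 2" using half_lt_ln2 by simp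
  then have D: "K * (2 ^ m - 1) < ln 2" using Kp by (simp add: algebra_simps)
  have q: "0 < (2::real) ^ m - 1" using pm by simp
  have "2 / ln 2 * K < 2 / (2 ^ m - 1)"
    using D q l2 by (simp add: field_simps)
  then show ?thesis using C by simp
qed


theorem mainTheorem5:
  fixes m :: nat and \<delta> :: real
  assumes "m \<ge> 2"
    and "0 \<le> \<delta>"
    and "\<delta> < 1 / (2 * real m) * (1 / 2 - 1 / (2 ^ m - 1))"
  shows "\<exists>N k d :: nat \<Rightarrow> nat.
           (\<forall>i. \<exists>C. stabilizer_code (N i) (k i) C \<and> min_dist (N i) C = d i)
         \<and> filterlim N at_top sequentially
         \<and> liminf (\<lambda>i. ereal (real (k i) / real (N i)))
             \<ge> ereal (1 - 10 / 3 * real m * \<delta> - 2 / (2 ^ m - 1))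
         \<and> liminf (\<lambda>i. ereal (real (d i) / real (N i))) \<ge> ereal \<delta>"
proof -
  note m = assms(1) and d0 = assms(2) and dlt = assms(3)
  define R where "R = 1 - 10 / 3 * real m * \<delta> - 2 / (2 ^ m - 1)"
  define q where "q = 1 / ((2::real) ^ m - 1)"
  have pm: "(4::real) \<le> 2 ^ m"
  proof -
    have "(2::real) ^ 2 \<le> 2 ^ m" using m by (intro power_increasing) auto
    then show ?thesis by simp
  qed
  have q0: "0 < q" using pm unfolding q_def by simp
  have q3: "q \<le> 1/3" using pm unfolding q_def by (simp add: field_simps)
  have mpos: "0 < real m" using m by simp
  have md: "real m * \<delta> < 1/2 * (1/2 - q)"
  proof -
    have "real m * \<delta> < real m * (1 / (2 * real m) * (1 / 2 - q))"
      using dlt mpos unfolding q_def by (intro mult_strict_left_mono) auto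
    also have "\<dots> = 1/2 * (1/2 - q)" using mpos by (simp add: field_simps)
    finally show ?thesis .
  qed
  have R_eq: "R = 1 - 10/3 * (real m * \<delta>) - 2 * q" unfolding R_def q_def by simp
  have Rpos: "0 < R"
  proof -
    have gen: "x < 1/2 * (1/2 - q) \<Longrightarrow> 0 < 1 - 10/3 * x - 2 * q" for x using q3 by argo
    show ?thesis unfolding R_eq by (rule gen[OF md])
  qed
  have d1: "\<delta> \<le> 1"
  proof -
    have "2 * \<delta> \<le> real m * \<delta>" using m d0 by (intro mult_right_mono) auto
    then show ?thesis using md q0 by argo
  qed
  define \<beta> where "\<beta> = (if \<delta> = 0 then 0 else \<delta> * (1 - ln \<delta>) / ln 2)"
  have \<beta>0: "0 \<le> \<beta>"
  proof (cases "\<delta> = 0")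
    case False
    then have dp: "0 < \<delta>" using d0 by simp
    have "ln \<delta> \<le> 0" using dp d1 by simp
    then have "0 \<le> 1 - ln \<delta>" by linarith
    then have "0 \<le> \<delta> * (1 - ln \<delta>)" using dp by (intro mult_nonneg_nonneg) auto
    then have "0 \<le> \<delta> * (1 - ln \<delta>) / ln 2" by (intro divide_nonneg_pos) auto
    then show ?thesis unfolding \<beta>_def using False by simp
  qed (simp add: \<beta>_def)
  have \<beta>lt: "2 * \<beta> < 1 - R"
  proof (cases "\<delta> = 0")
    case True
    then show ?thesis unfolding \<beta>_def R_eq using q0 by simp
  next
    case False
    then have dp: "0 < \<delta>" using d0 by simp
    show ?thesis using key_ineq[OF m dp] False unfolding \<beta>_def R_def by simp
  qed
  define \<eta> where "\<eta> = 1 - R - 2 * \<beta>"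
  have \<eta>0: "0 < \<eta>" using \<beta>lt unfolding \<eta>_def by simp
  define dd where "dd n = (if \<delta> = 0 then 1 else nat \<lceil>\<delta> * real n\<rceil>)" for n
  define ss where "ss n = nat \<lceil>\<beta> * real n\<rceil>" for n
  define n0 where "n0 = nat \<lceil>4 / \<eta>\<rceil> + 1"
  have props: "1 \<le> dd n \<and> \<delta> * n \<le> dd n \<and> V n (dd n) \<le> 2 ^ ss n \<and> 2 * ss n + 3 \<le> n
      \<and> R * n \<le> real (n - (2 * ss n + 2))" if n: "n0 \<le> n" for n
  proof -
    have "4 / \<eta> < real n" using n unfolding n0_def using real_nat_ceiling_ge[of "4 / \<eta>"] by linarith
    then have n\<eta>: "4 < real n * \<eta>" using \<eta>0 by (simp add: field_simps)
    have n1: "1 \<le> n" using n unfolding n0_def by simp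
    have A: "1 \<le> dd n \<and> \<delta> * n \<le> dd n"
    proof (cases "\<delta> = 0")
      case True then show ?thesis unfolding dd_def by simp
    next
      case False
      then have "0 < \<delta> * real n" using d0 n1 by simp
      then have "0 < \<lceil>\<delta> * real n\<rceil>" by simp
      then have "1 \<le> nat \<lceil>\<delta> * real n\<rceil>" by linarith
      then show ?thesis unfolding dd_def using False real_nat_ceiling_ge[of "\<delta> * real n"] by simp
    qed
    have B: "V n (dd n) \<le> 2 ^ ss n"
    proof (cases "\<delta> = 0")
      case True then show ?thesis unfolding dd_def ss_def \<beta>_def using V_one by simp
    next
      case False
      then have dp: "0 < \<delta>" using d0 by simp
      show ?thesis unfolding dd_def ss_def \<beta>_def using V_bound[OF dp d1, of n] False by simp
    qed
    have sb: "real (ss n) \<le> \<beta> * n + 1"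
    proof -
      have "0 \<le> \<beta> * real n" using \<beta>0 by simp
      then have "real (ss n) = of_int \<lceil>\<beta> * real n\<rceil>" unfolding ss_def by simp
      then show ?thesis using ceiling_correct[of "\<beta> * real n"] by linarith
    qed
    have "real (2 * ss n + 2) \<le> 2 * \<beta> * n + 4" using sb by simp
    also have "\<dots> = real n * (1 - R - \<eta>) + 4" unfolding \<eta>_def by (simp add: algebra_simps)
    also have "\<dots> < real n - R * n" using n\<eta> by (simp add: algebra_simps)
    finally have C: "real (2 * ss n + 2) < real n - R * n" .
    have Rn: "0 < R * real n" using Rpos n1 by simp
    have D: "2 * ss n + 3 \<le> n" using C Rn by linarith
    have E: "R * n \<le> real (n - (2 * ss n + 2))" using C D by (simp add: of_nat_diff)
    show ?thesis using A B D E by blast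
  qed
  have "\<forall>n. \<exists>C. n0 \<le> n \<longrightarrow> stabilizer_code n (n - (2 * ss n + 2)) C \<and> dd n \<le> min_dist n C"
  proof
    fix n
    show "\<exists>C. n0 \<le> n \<longrightarrow> stabilizer_code n (n - (2 * ss n + 2)) C \<and> dd n \<le> min_dist n C"
    proof (cases "n0 \<le> n")
      case True
      then have p: "1 \<le> dd n" "V n (dd n) \<le> 2 ^ ss n" "2 * ss n + 3 \<le> n" using props by blast+
      show ?thesis using code_exists[OF p] by blast
    qed simp
  qed
  then obtain Cf where Cf: "\<And>n. n0 \<le> n \<Longrightarrow> stabilizer_code n (n - (2 * ss n + 2)) (Cf n) \<and> dd n \<le> min_dist n (Cf n)"
    by metis
  define N where "N i = i + n0" for i
  define k where "k i = N i - (2 * ss (N i) + 2)" for i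
  define d where "d i = min_dist (N i) (Cf (N i))" for i
  have Nge: "n0 \<le> N i" for i unfolding N_def by simp
  have Npos: "0 < real (N i)" for i unfolding N_def n0_def by simp
  have P1: "\<forall>i. \<exists>C. stabilizer_code (N i) (k i) C \<and> min_dist (N i) C = d i"
    using Cf Nge unfolding k_def d_def by blast
  have P2: "filterlim N at_top sequentially"
    unfolding N_def by (rule filterlim_add_const_nat_at_top)
  have P3: "liminf (\<lambda>i. ereal (real (k i) / real (N i))) \<ge> ereal R"
  proof (rule Liminf_bounded, rule always_eventually, rule allI)
    fix i
    have "R * real (N i) \<le> real (k i)" using props[OF Nge[of i]] unfolding k_def by blast
    then have "R \<le> real (k i) / real (N i)" using Npos[of i] by (simp add: pos_le_divide_eq)
    then show "ereal R \<le> ereal (real (k i) / real (N i))" by simp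
  qed
  have P4: "liminf (\<lambda>i. ereal (real (d i) / real (N i))) \<ge> ereal \<delta>"
  proof (rule Liminf_bounded, rule always_eventually, rule allI)
    fix i
    have "\<delta> * real (N i) \<le> real (dd (N i))" using props[OF Nge[of i]] by blast
    also have "\<dots> \<le> real (d i)" using Cf[OF Nge[of i]] unfolding d_def by simp
    finally have "\<delta> \<le> real (d i) / real (N i)" using Npos[of i] by (simp add: pos_le_divide_eq)
    then show "ereal \<delta> \<le> ereal (real (d i) / real (N i))" by simp
  qed
  show ?thesis using P1 P2 P3 P4 unfolding R_def by blast
qed

end
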